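(* For every $K>1$ and every $p>q\ge 1$, the space $\ell_p$ admits a $K$-localized weakly bi-Lipschitz embedding into $\ell_q$ with distortion $O_{p/q}(K^{p/q-1})$, where the implied constant depends only on $p/q$.
   Context: Given $K,D>1$, a metric space $(\mathcal{M},d_\mathcal{M})$ admits a $K$-localized weakly bi-Lipschitz embedding into a metric space $(\mathcal{N},d_\mathcal{N})$ with distortion $D$ if for every $\Delta>0$ and every subset $\mathcal{C}\subseteq\mathcal{M}$ with $\operatorname{diam}_\mathcal{M}(\mathcal{C})\le K\Delta$ there is a non-constant Lipschitz function $f:\mathcal{C}\to\mathcal{N}$ such that for all $x,y\in\mathcal{C}$ with $d_\mathcal{M}(x,y)>\Delta$, $d_\mathcal{N}(f(x),f(y))>\frac{\|f\|_{\mathrm{Lip}}}{D}\Delta$, where $\|f\|_{\mathrm{Lip}}$ is the Lipschitz constant of $f$. $\ell_p,\ell_q$ are the sequence spaces with the $\ell_p$, $\ell_q$ norms. *)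

theory Defs
  imports "HOL-Analysis.Analysis"
begin

definition lp_space :: "real \<Rightarrow> (nat \<Rightarrow> real) set" where
  "lp_space p = {x. summable (\<lambda>n. \<bar>x n\<bar> powr p)}"

definition lp_dist :: "real \<Rightarrow> (nat \<Rightarrow> real) \<Rightarrow> (nat \<Rightarrow> real) \<Rightarrow> real" where
  "lp_dist p x y = (\<Sum>n. \<bar>x n - y n\<bar> powr p) powr (1 / p)"

definition lipschitz_wrt ::
  "('a \<Rightarrow> 'a \<Rightarrow> real) \<Rightarrow> ('b \<Rightarrow> 'b \<Rightarrow> real) \<Rightarrow> 'a set \<Rightarrow> ('a \<Rightarrow> 'b) \<Rightarrow> bool" where
  "lipschitz_wrt dM dN C f \<longleftrightarrow> (\<exists>B. \<forall>x\<in>C. \<forall>y\<in>C. dN (f x) (f y) \<le> B * dM x y)"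

definition lip_const ::
  "('a \<Rightarrow> 'a \<Rightarrow> real) \<Rightarrow> ('b \<Rightarrow> 'b \<Rightarrow> real) \<Rightarrow> 'a set \<Rightarrow> ('a \<Rightarrow> 'b) \<Rightarrow> real" where
  "lip_const dM dN C f = Sup {dN (f x) (f y) / dM x y | x y. x \<in> C \<and> y \<in> C \<and> x \<noteq> y}"

text \<open>The diameter bound diam(C) <= K*Delta is written out as a bound on all pairwise distances;
  only subsets with at least two points are considered (a non-constant map needs them).\<close>
definition localized_wbl_embedding ::
  "'a set \<Rightarrow> ('a \<Rightarrow> 'a \<Rightarrow> real) \<Rightarrow> 'b set \<Rightarrow> ('b \<Rightarrow> 'b \<Rightarrow> real) \<Rightarrow> real \<Rightarrow> real \<Rightarrow> bool" where
  "localized_wbl_embedding M dM N dN K D \<longleftrightarrow> 1 < K \<and> 1 < D \<and>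
     (\<forall>\<Delta>>0. \<forall>C. C \<subseteq> M \<and> (\<exists>x\<in>C. \<exists>y\<in>C. x \<noteq> y) \<and>
        (\<forall>x\<in>C. \<forall>y\<in>C. dM x y \<le> K * \<Delta>) \<longrightarrow>
        (\<exists>f. f ` C \<subseteq> N \<and> lipschitz_wrt dM dN C f \<and> (\<exists>x\<in>C. \<exists>y\<in>C. f x \<noteq> f y) \<and>
             (\<forall>x\<in>C. \<forall>y\<in>C. dM x y > \<Delta> \<longrightarrow>
                dN (f x) (f y) > lip_const dM dN C f / D * \<Delta>)))"

end

theory Submission imports Defs begin

lemma pw_split: "0 \<le> (u::real) \<Longrightarrow> r \<ge> 1 \<Longrightarrow> u powr r = u * u powr (r - 1)"
  by (cases "u = 0") (auto simp: powr_mult_base)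

lemma superadd: assumes "0 \<le> (u::real)" "0 \<le> v" "r \<ge> 1"
  shows "u powr r + v powr r \<le> (u + v) powr r"
proof -
  have "u powr r \<le> u * (u+v) powr (r-1)"
    using assms by (subst pw_split) (auto intro!: mult_left_mono powr_mono2)
  moreover have "v powr r \<le> v * (u+v) powr (r-1)"
    using assms by (subst pw_split) (auto intro!: mult_left_mono powr_mono2)
  ultimately have "u powr r + v powr r \<le> (u+v) * (u+v) powr (r-1)" by (simp add: algebra_simps)
  also have "\<dots> = (u+v) powr r" using assms pw_split[of "u+v" r] by simp
  finally show ?thesis .
qed

lemma G1: assumes "0 \<le> (y::real)" "y \<le> x" "r \<ge> 1"
  shows "(x - y) powr r \<le> x powr r - y powr r"
  using superadd[of "x-y" y r] assms by simp

lemma G2: assumes "0 \<le> (x::real)" "0 \<le> y" "r \<ge> 1"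
  shows "2 powr (-r) * (x + y) powr r \<le> x powr r + y powr r"
proof -
  have "2 powr (-r) * (x + y) powr r = ((x+y)/2) powr r"
    using assms by (simp add: powr_divide powr_minus divide_simps)
  also have "\<dots> \<le> (max x y) powr r" using assms by (intro powr_mono2) auto
  also have "\<dots> \<le> x powr r + y powr r" using assms by (auto simp: max_def)
  finally show ?thesis .
qed

lemma H1a: assumes "0 \<le> (y::real)" "y \<le> x" "r \<ge> 1"
  shows "x powr r - y powr r \<le> r * (x - y) * x powr (r - 1)"
proof (cases "y = 0")
  case True
  have "1 * (x * x powr (r-1)) \<le> r * (x * x powr (r-1))"
    using assms by (intro mult_right_mono) auto
  then show ?thesis using assms True pw_split[of x r] by (simp add: algebra_simps)
next
  case False
  hence y: "y > 0" "x > 0" using assms by auto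
  have "y * x powr (r * (1 - 1/r)) \<le> (1/r) * y powr r + (1 - 1/r) * x powr r"
    using Youngs_inequality_0[of "1/r" "1 - 1/r" "y powr r" "x powr r"] y assms
    by (simp add: powr_powr)
  moreover have "r * (1 - 1/r) = r - 1" using assms by (simp add: field_simps)
  ultimately have "y * x powr (r - 1) \<le> (1/r) * y powr r + (1 - 1/r) * x powr r"
    by simp
  hence "r * (y * x powr (r - 1)) \<le> r * ((1/r) * y powr r + (1 - 1/r) * x powr r)"
    using assms by (intro mult_left_mono) auto
  hence "r * y * x powr (r - 1) \<le> y powr r + (r - 1) * x powr r"
    using assms by (simp add: algebra_simps)
  moreover have "x powr r = x * x powr (r - 1)" using pw_split y assms by simp
  ultimately show ?thesis by (simp add: algebra_simps)
qed

lemma H2: assumes "0 \<le> (x::real)" "0 \<le> y" "r \<ge> 1"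
  shows "x powr r + y powr r \<le> r * (x + y) * max x y powr (r - 1)"
proof -
  have "x powr r \<le> x * max x y powr (r-1)"
    using assms by (subst pw_split) (auto intro!: mult_left_mono powr_mono2)
  moreover have "y powr r \<le> y * max x y powr (r-1)"
    using assms by (subst pw_split) (auto intro!: mult_left_mono powr_mono2)
  ultimately have "x powr r + y powr r \<le> 1 * ((x+y) * max x y powr (r-1))" by (simp add: algebra_simps)
  also have "\<dots> \<le> r * ((x+y) * max x y powr (r-1))"
    using assms by (intro mult_right_mono) auto
  finally show ?thesis by (simp add: algebra_simps)
qed

lemma same_up: assumes "0 \<le> (x::real)" "0 \<le> y" "r \<ge> 1"
  shows "\<bar>x powr r - y powr r\<bar> \<le> r * \<bar>x - y\<bar> * max x y powr (r - 1)"
proof (cases "y \<le> x")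
  case True
  moreover have "y powr r \<le> x powr r" using True assms by (intro powr_mono2) auto
  ultimately show ?thesis using H1a[of y x r] assms by (simp add: max_def)
next
  case False
  moreover have "x powr r \<le> y powr r" using False assms by (intro powr_mono2) auto
  ultimately show ?thesis using H1a[of x y r] assms by (simp add: max_def)
qed

lemma same_low: assumes "0 \<le> (x::real)" "0 \<le> y" "r \<ge> 1"
  shows "2 powr (-r) * \<bar>x - y\<bar> powr r \<le> \<bar>x powr r - y powr r\<bar>"
proof -
  have "\<bar>x - y\<bar> powr r \<le> \<bar>x powr r - y powr r\<bar>"
  proof (cases "y \<le> x")
    case True
    then show ?thesis using G1[of y x r] assms by simp
  next
    case False
    then show ?thesis using G1[of x y r] assms by simp
  qed
  moreover have "2 powr (-r) \<le> 2 powr 0" using assms by (intro powr_mono) auto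
  hence "2 powr (-r) \<le> 1" by simp
  ultimately show ?thesis
    by (meson abs_ge_zero dual_order.trans mult_left_le_one_le powr_ge_zero powr_nonneg_iff)
qed

definition phi :: "real \<Rightarrow> real \<Rightarrow> real" where
  "phi r t = sgn t * \<bar>t\<bar> powr r"

lemma phi_pos: "0 \<le> a \<Longrightarrow> phi r a = a powr r"
  by (cases "a = 0") (auto simp: phi_def)

lemma phi_neg: "a < 0 \<Longrightarrow> phi r a = - ((-a) powr r)"
  by (auto simp: phi_def)

lemma abs_phi: "\<bar>phi r a\<bar> = \<bar>a\<bar> powr r"
  by (cases "a = 0") (auto simp: phi_def abs_mult)

lemma phi_up: assumes "r \<ge> 1"
  shows "\<bar>phi r a - phi r b\<bar> \<le> r * \<bar>a - b\<bar> * max \<bar>a\<bar> \<bar>b\<bar> powr (r - 1)"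
proof (cases "0 \<le> a")
  case a: True
  show ?thesis
  proof (cases "0 \<le> b")
    case True
    then show ?thesis using a same_up[of a b r] assms by (simp add: phi_pos)
  next
    case False
    then show ?thesis using a H2[of a "-b" r] assms
      by (simp add: phi_pos phi_neg abs_of_nonneg)
  qed
next
  case a: False
  show ?thesis
  proof (cases "0 \<le> b")
    case True
    have e: "\<bar>phi r a - phi r b\<bar> = b powr r + (-a) powr r"
    proof -
      have "phi r a - phi r b = -(b powr r + (-a) powr r)"
        using a True by (simp add: phi_pos phi_neg)
      moreover have "0 \<le> b powr r + (-a) powr r" by simp
      ultimately show ?thesis by linarith
    qed
    show ?thesis unfolding e using a True H2[of "-a" b r] assms
      by (simp add: abs_of_nonneg abs_of_neg max.commute add.commute)
  next
    case False
    then show ?thesis using a same_up[of "-a" "-b" r] assms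
      by (simp add: phi_neg abs_of_neg abs_minus_commute)
  qed
qed

lemma phi_low: assumes "r \<ge> 1"
  shows "2 powr (-r) * \<bar>a - b\<bar> powr r \<le> \<bar>phi r a - phi r b\<bar>"
proof (cases "0 \<le> a")
  case a: True
  show ?thesis
  proof (cases "0 \<le> b")
    case True
    then show ?thesis using a same_low[of a b r] assms by (simp add: phi_pos)
  next
    case False
    then show ?thesis using a G2[of a "-b" r] assms
      by (simp add: phi_pos phi_neg abs_of_nonneg)
  qed
next
  case a: False
  show ?thesis
  proof (cases "0 \<le> b")
    case True
    have e: "\<bar>phi r a - phi r b\<bar> = b powr r + (-a) powr r"
    proof -
      have "phi r a - phi r b = -(b powr r + (-a) powr r)"
        using a True by (simp add: phi_pos phi_neg)
      moreover have "0 \<le> b powr r + (-a) powr r" by simp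
      ultimately show ?thesis by linarith
    qed
    show ?thesis unfolding e using a True G2[of "-a" b r] assms
      by (simp add: abs_of_nonneg abs_of_neg add.commute)
  next
    case False
    then show ?thesis using a same_low[of "-a" "-b" r] assms
      by (simp add: phi_neg abs_of_neg abs_minus_commute)
  qed
qed

lemma diff_pow_le: assumes "0 < (p::real)"
  shows "\<bar>a - b\<bar> powr p \<le> 2 powr p * (\<bar>a\<bar> powr p + \<bar>b\<bar> powr p)"
proof -
  have "\<bar>a - b\<bar> powr p \<le> (2 * max \<bar>a\<bar> \<bar>b\<bar>) powr p"
    using assms by (intro powr_mono2) auto
  also have "\<dots> = 2 powr p * max \<bar>a\<bar> \<bar>b\<bar> powr p" by (simp add: powr_mult)
  also have "\<dots> \<le> 2 powr p * (\<bar>a\<bar> powr p + \<bar>b\<bar> powr p)"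
    by (intro mult_left_mono) (auto simp: max_def)
  finally show ?thesis .
qed

lemma sum_diff: assumes "0 < (p::real)" "summable (\<lambda>i. \<bar>u i\<bar> powr p)" "summable (\<lambda>i. \<bar>v i\<bar> powr p)"
  shows "summable (\<lambda>i. \<bar>u i - v i\<bar> powr p)"
proof (rule summable_comparison_test)
  show "\<exists>N. \<forall>n\<ge>N. norm (\<bar>u n - v n\<bar> powr p) \<le> 2 powr p * (\<bar>u n\<bar> powr p + \<bar>v n\<bar> powr p)"
    using diff_pow_le[OF assms(1)] by auto
  show "summable (\<lambda>n. 2 powr p * (\<bar>u n\<bar> powr p + \<bar>v n\<bar> powr p))"
    using assms by (intro summable_mult summable_add)
qed

lemma abs_phi_pow: assumes "0 \<le> r" "p = r * q" shows "\<bar>phi r a\<bar> powr q = \<bar>a\<bar> powr p"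
  using assms by (simp add: abs_phi powr_powr)

lemma mazur_mem: assumes "0 \<le> r" "p = r * q" "summable (\<lambda>i. \<bar>u i\<bar> powr p)"
  shows "summable (\<lambda>i. \<bar>phi r (u i)\<bar> powr q)"
  using assms by (simp add: abs_phi_pow)

lemma mazur_lower: assumes "1 \<le> r" "0 < q" "p = r * q"
  "summable (\<lambda>i. \<bar>u i\<bar> powr p)" "summable (\<lambda>i. \<bar>v i\<bar> powr p)"
  shows "2 powr (-r) * (\<Sum>i. \<bar>u i - v i\<bar> powr p) powr (1/q)
     \<le> (\<Sum>i. \<bar>phi r (u i) - phi r (v i)\<bar> powr q) powr (1/q)"
proof -
  have p: "0 < p" using assms by simp
  have su: "summable (\<lambda>i. \<bar>u i - v i\<bar> powr p)" using sum_diff[OF p assms(4,5)] .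
  have sphi: "summable (\<lambda>i. \<bar>phi r (u i) - phi r (v i)\<bar> powr q)"
    using sum_diff[OF assms(2) mazur_mem[of r p q u] mazur_mem[of r p q v]] assms by simp
  have trm: "2 powr (-r*q) * \<bar>u i - v i\<bar> powr p \<le> \<bar>phi r (u i) - phi r (v i)\<bar> powr q" for i
  proof -
    have "(2 powr (-r) * \<bar>u i - v i\<bar> powr r) powr q \<le> \<bar>phi r (u i) - phi r (v i)\<bar> powr q"
      using phi_low[OF assms(1), of "u i" "v i"] assms by (intro powr_mono2) auto
    moreover have "(2 powr (-r) * \<bar>u i - v i\<bar> powr r) powr q = 2 powr (-r*q) * \<bar>u i - v i\<bar> powr p"
      using assms by (simp add: powr_mult powr_powr)
    ultimately show ?thesis by simp
  qed
  have "2 powr (-r*q) * (\<Sum>i. \<bar>u i - v i\<bar> powr p) \<le> (\<Sum>i. \<bar>phi r (u i) - phi r (v i)\<bar> powr q)"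
    using suminf_le[OF trm summable_mult[OF su] sphi] suminf_mult[OF su] by simp
  hence "(2 powr (-r*q) * (\<Sum>i. \<bar>u i - v i\<bar> powr p)) powr (1/q) \<le> (\<Sum>i. \<bar>phi r (u i) - phi r (v i)\<bar> powr q) powr (1/q)"
    using assms su suminf_nonneg[OF su] by (intro powr_mono2) auto
  moreover have "(2 powr (-r*q) * (\<Sum>i. \<bar>u i - v i\<bar> powr p)) powr (1/q) = 2 powr (-r) * (\<Sum>i. \<bar>u i - v i\<bar> powr p) powr (1/q)"
    using assms su by (simp add: powr_mult powr_powr suminf_nonneg)
  ultimately show ?thesis by simp
qed

lemma young_scaled: fixes r q p l d m :: real assumes "1 < r" "0 < q" "p = r * q" "0 < l" "0 \<le> d" "0 \<le> m"
  shows "d powr q * m powr ((r-1)*q) \<le> l / r * d powr p + l powr (-1/(r-1)) * ((r-1)/r) * m powr p"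
proof (cases "d = 0 \<or> m = 0")
  case True
  have "0 \<le> l / r * d powr p + l powr (-1/(r-1)) * ((r-1)/r) * m powr p"
  proof -
    have "0 \<le> l / r" using assms by (intro divide_nonneg_pos) auto
    hence "0 \<le> l / r * d powr p" by (intro mult_nonneg_nonneg) auto
    moreover have "0 \<le> (r-1)/r" using assms by simp
    hence "0 \<le> l powr (-1/(r-1)) * ((r-1)/r) * m powr p" by (intro mult_nonneg_nonneg) auto
    ultimately show ?thesis by linarith
  qed
  moreover have "d powr q * m powr ((r-1)*q) = 0" using True assms by auto
  ultimately show ?thesis by linarith
next
  case False
  hence dm: "0 < d" "0 < m" using assms by auto
  define mu where "mu = l powr (-1/(r-1))"
  have mu: "0 < mu" using assms by (simp add: mu_def)
  have Y: "(l * d powr p) powr (1/r) * (mu * m powr p) powr (1 - 1/r)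
      \<le> 1/r * (l * d powr p) + (1 - 1/r) * (mu * m powr p)"
    using Youngs_inequality_0[of "1/r" "1 - 1/r" "l * d powr p" "mu * m powr p"] assms dm mu by simp
  have e1: "(l * d powr p) powr (1/r) = l powr (1/r) * d powr q"
    using assms dm by (simp add: powr_mult powr_powr)
  have e2: "(mu * m powr p) powr (1 - 1/r) = l powr (-1/r) * m powr ((r-1)*q)"
  proof -
    have "(mu * m powr p) powr (1 - 1/r) = mu powr (1 - 1/r) * m powr (p * (1 - 1/r))"
      using mu dm by (simp add: powr_mult powr_powr)
    moreover have "mu powr (1 - 1/r) = l powr (-1/r)"
      unfolding mu_def using assms by (simp add: powr_powr field_simps)
    moreover have "p * (1 - 1/r) = (r-1)*q" using assms by (simp add: field_simps)
    ultimately show ?thesis by simp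
  qed
  have e3: "l powr (1/r) * l powr (-1/r) = 1"
    using assms by (simp add: powr_add[symmetric])
  have "d powr q * m powr ((r-1)*q) = (l * d powr p) powr (1/r) * (mu * m powr p) powr (1 - 1/r)"
    unfolding e1 e2 using e3 by (simp add: algebra_simps)
  also have "\<dots> \<le> 1/r * (l * d powr p) + (1 - 1/r) * (mu * m powr p)" by (rule Y)
  also have "\<dots> = l / r * d powr p + l powr (-1/(r-1)) * ((r-1)/r) * m powr p"
    unfolding mu_def using assms by (simp add: field_simps)
  finally show ?thesis .
qed

lemma phi_up_pow: assumes "1 < r" "0 < q" "p = r * q" "0 < l"
  shows "\<bar>phi r a - phi r b\<bar> powr q \<le> r powr q * (l / r * \<bar>a - b\<bar> powr p
     + l powr (-1/(r-1)) * ((r-1)/r) * (\<bar>a\<bar> powr p + \<bar>b\<bar> powr p))"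
proof -
  define d where "d = \<bar>a - b\<bar>"
  define m where "m = max \<bar>a\<bar> \<bar>b\<bar>"
  have d: "0 \<le> d" and m: "0 \<le> m" by (auto simp: d_def m_def)
  have "\<bar>phi r a - phi r b\<bar> powr q \<le> (r * d * m powr (r-1)) powr q"
    using phi_up[of r a b] assms unfolding d_def m_def by (intro powr_mono2) auto
  also have "\<dots> = r powr q * (d powr q * m powr ((r-1)*q))"
    using assms d m by (simp add: powr_mult powr_powr mult.commute)
  also have "\<dots> \<le> r powr q * (l / r * d powr p + l powr (-1/(r-1)) * ((r-1)/r) * m powr p)"
    using young_scaled[OF assms d m] by (intro mult_left_mono) auto
  also have "\<dots> \<le> r powr q * (l / r * d powr p + l powr (-1/(r-1)) * ((r-1)/r) * (\<bar>a\<bar> powr p + \<bar>b\<bar> powr p))"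
  proof -
    have "m powr p \<le> \<bar>a\<bar> powr p + \<bar>b\<bar> powr p" by (auto simp: m_def max_def)
    moreover have "0 \<le> l powr (-1/(r-1)) * ((r-1)/r)" using assms by auto
    ultimately show ?thesis
      by (intro mult_left_mono add_left_mono) (auto intro: mult_left_mono)
  qed
  finally show ?thesis unfolding d_def .
qed

lemma mazur_upper: fixes r q p :: real
  assumes "1 < r" "1 \<le> q" "p = r * q"
  "summable (\<lambda>i. \<bar>u i\<bar> powr p)" "summable (\<lambda>i. \<bar>v i\<bar> powr p)"
  "(\<Sum>i. \<bar>u i\<bar> powr p) \<le> 1" "(\<Sum>i. \<bar>v i\<bar> powr p) \<le> 1"
  shows "(\<Sum>i. \<bar>phi r (u i) - phi r (v i)\<bar> powr q) powr (1/q)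
     \<le> 2 * r * (\<Sum>i. \<bar>u i - v i\<bar> powr p) powr (1/p)"
proof -
  have q: "0 < q" and p: "0 < p" using assms by auto
  have su: "summable (\<lambda>i. \<bar>u i - v i\<bar> powr p)" using sum_diff[OF p assms(4,5)] .
  have sphi: "summable (\<lambda>i. \<bar>phi r (u i) - phi r (v i)\<bar> powr q)"
    using sum_diff[OF q mazur_mem[of r p q u] mazur_mem[of r p q v]] assms by simp
  define A where "A = (\<Sum>i. \<bar>u i - v i\<bar> powr p)"
  have A0: "0 \<le> A" unfolding A_def using suminf_nonneg[OF su] by simp
  show ?thesis
  proof (cases "A = 0")
    case True
    hence "\<forall>i. \<bar>u i - v i\<bar> powr p = 0"
      using suminf_eq_zero_iff[OF su] unfolding A_def by simp
    hence "\<forall>i. u i = v i" by simp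
    thus ?thesis by simp
  next
    case False
    hence A: "0 < A" using A0 by simp
    define l where "l = A powr (1/r - 1)"
    have l: "0 < l" using A by (simp add: l_def)
    define c where "c = l powr (-1/(r-1)) * ((r-1)/r)"
    have c0: "0 \<le> c" using assms by (simp add: c_def)
    define g where "g = (\<lambda>i. r powr q * (l / r * \<bar>u i - v i\<bar> powr p
        + c * (\<bar>u i\<bar> powr p + \<bar>v i\<bar> powr p)))"
    have gs: "summable g" unfolding g_def using su assms
      by (intro summable_mult summable_add summable_mult) auto
    have gsum: "suminf g = r powr q * (l / r * A + c * ((\<Sum>i. \<bar>u i\<bar> powr p) + (\<Sum>i. \<bar>v i\<bar> powr p)))"
    proof -
      have "suminf g = r powr q * (\<Sum>i. l / r * \<bar>u i - v i\<bar> powr p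
        + c * (\<bar>u i\<bar> powr p + \<bar>v i\<bar> powr p))"
        unfolding g_def using su assms by (intro suminf_mult summable_add summable_mult) auto
      also have "(\<Sum>i. l / r * \<bar>u i - v i\<bar> powr p + c * (\<bar>u i\<bar> powr p + \<bar>v i\<bar> powr p))
         = (\<Sum>i. l / r * \<bar>u i - v i\<bar> powr p) + (\<Sum>i. c * (\<bar>u i\<bar> powr p + \<bar>v i\<bar> powr p))"
        using su assms by (intro suminf_add[symmetric] summable_add summable_mult) auto
      also have "(\<Sum>i. l / r * \<bar>u i - v i\<bar> powr p) = l / r * A"
        unfolding A_def using su by (rule suminf_mult)
      also have "(\<Sum>i. c * (\<bar>u i\<bar> powr p + \<bar>v i\<bar> powr p)) = c * (\<Sum>i. \<bar>u i\<bar> powr p + \<bar>v i\<bar> powr p)"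
        using assms by (intro suminf_mult summable_add) auto
      also have "(\<Sum>i. \<bar>u i\<bar> powr p + \<bar>v i\<bar> powr p) = (\<Sum>i. \<bar>u i\<bar> powr p) + (\<Sum>i. \<bar>v i\<bar> powr p)"
        using assms by (intro suminf_add[symmetric]) auto
      finally show ?thesis .
    qed
    have "(\<Sum>i. \<bar>phi r (u i) - phi r (v i)\<bar> powr q) \<le> suminf g"
    proof (rule suminf_le[OF _ sphi gs])
      fix i show "\<bar>phi r (u i) - phi r (v i)\<bar> powr q \<le> g i"
        unfolding g_def c_def using phi_up_pow[OF assms(1) q assms(3) l, of "u i" "v i"]
        by (simp add: mult.assoc)
    qed
    also have "\<dots> \<le> r powr q * (l / r * A + c * 2)"
      unfolding gsum using assms c0 by (intro mult_left_mono add_left_mono) auto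
    also have "l / r * A = A powr (1/r) / r"
    proof -
      have e: "A powr (1/r - 1 + 1) = A powr (1/r - 1) * A powr 1" by (rule powr_add)
      have "A powr 1 = A" using A by simp
      with e show ?thesis by (simp add: l_def)
    qed
    also have "c = A powr (1/r) * ((r-1)/r)"
    proof -
      have "(1/r - 1) * (-1/(r-1)) = 1/r" using assms by (simp add: field_simps)
      thus ?thesis unfolding c_def l_def using A by (simp add: powr_powr)
    qed
    also have "r powr q * (A powr (1/r) / r + A powr (1/r) * ((r-1)/r) * 2)
        = r powr q * A powr (1/r) * ((2*r - 1) / r)"
      using assms by (simp add: field_simps)
    also have "\<dots> \<le> r powr q * A powr (1/r) * 2"
      using assms by (intro mult_left_mono) (auto simp: field_simps)
    finally have Sq: "(\<Sum>i. \<bar>phi r (u i) - phi r (v i)\<bar> powr q) \<le> 2 * r powr q * A powr (1/r)"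
      by simp
    have "(\<Sum>i. \<bar>phi r (u i) - phi r (v i)\<bar> powr q) powr (1/q) \<le> (2 * r powr q * A powr (1/r)) powr (1/q)"
      using Sq q suminf_nonneg[OF sphi] by (intro powr_mono2) auto
    also have "\<dots> = 2 powr (1/q) * r * A powr (1/p)"
      using assms A by (simp add: powr_mult powr_powr)
    also have "\<dots> \<le> 2 * r * A powr (1/p)"
    proof -
      have "2 powr (1/q) \<le> 2 powr 1" using assms by (intro powr_mono) auto
      thus ?thesis using assms by (intro mult_right_mono) auto
    qed
    finally show ?thesis unfolding A_def .
  qed
qed

lemma scale_terms: assumes "0 < s" "0 < (p::real)"
  shows "\<bar>(x i - z i)/s - (y i - z i)/s\<bar> powr p = \<bar>x i - y i\<bar> powr p / s powr p"
proof -
  have "(x i - z i)/s - (y i - z i)/s = (x i - y i)/s" by (simp add: diff_divide_distrib)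
  thus ?thesis using assms by (simp add: abs_divide powr_divide)
qed

lemma scale_sum: assumes "0 < s" "0 < (p::real)" "summable (\<lambda>i. \<bar>x i - y i\<bar> powr p)"
  shows "summable (\<lambda>i. \<bar>(x i - z i)/s - (y i - z i)/s\<bar> powr p)"
    "(\<Sum>i. \<bar>(x i - z i)/s - (y i - z i)/s\<bar> powr p) = (\<Sum>i. \<bar>x i - y i\<bar> powr p) / s powr p"
  using assms by (simp_all add: scale_terms suminf_divide)

lemma scale_dist: assumes "0 < s" "0 < (p::real)" "summable (\<lambda>i. \<bar>x i - y i\<bar> powr p)"
  shows "(\<Sum>i. \<bar>(x i - z i)/s - (y i - z i)/s\<bar> powr p) powr (1/p) = lp_dist p x y / s"
proof -
  have "0 \<le> (\<Sum>i. \<bar>x i - y i\<bar> powr p)" using suminf_nonneg[OF assms(3)] by simp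
  thus ?thesis unfolding scale_sum(2)[OF assms] lp_dist_def using assms
    by (simp add: powr_divide powr_powr)
qed

lemma single_sum: assumes "0 < s" "0 < (p::real)" "summable (\<lambda>i. \<bar>x i - z i\<bar> powr p)"
  shows "summable (\<lambda>i. \<bar>(x i - z i)/s\<bar> powr p)"
    "(\<Sum>i. \<bar>(x i - z i)/s\<bar> powr p) = (\<Sum>i. \<bar>x i - z i\<bar> powr p) / s powr p"
  using scale_sum[OF assms, of z] by simp_all

lemma dist_pow: assumes "0 < (p::real)" "summable (\<lambda>i. \<bar>x i - y i\<bar> powr p)"
  shows "lp_dist p x y powr p = (\<Sum>i. \<bar>x i - y i\<bar> powr p)"
proof -
  have "0 \<le> (\<Sum>i. \<bar>x i - y i\<bar> powr p)" using suminf_nonneg[OF assms(2)] by simp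
  thus ?thesis unfolding lp_dist_def using assms by (simp add: powr_powr)
qed

lemma phi_inj: "1 \<le> r \<Longrightarrow> phi r a = phi r b \<Longrightarrow> a = b"
  using phi_low[of r a b] by (simp add: mult_le_0_iff)

lemma main_emb:
  fixes K p q :: real
  assumes K: "1 < K" and q: "1 \<le> q" and pq: "q < p"
  shows "localized_wbl_embedding (lp_space p) (lp_dist p) (lp_space q) (lp_dist q)
             K (((p/q) * 2 powr (p/q + 1) + 1) * K powr (p / q - 1))"
proof -
  define r where "r = p / q"
  have qpos: "0 < q" using q by simp
  have r1: "1 < r" using pq qpos by (simp add: r_def)
  have pr: "p = r * q" using qpos by (simp add: r_def)
  have ppos: "0 < p" using pq qpos by simp
  define c where "c = r * 2 powr (r + 1) + 1"
  define D where "D = c * K powr (r - 1)"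
  have Kr: "1 \<le> K powr (r - 1)" using K r1 by (intro ge_one_powr_ge_zero) auto
  have c1: "1 < c" using r1 by (simp add: c_def)
  have D1: "1 < D"
  proof -
    have "c * 1 \<le> c * K powr (r - 1)" using Kr c1 by (intro mult_left_mono) auto
    thus ?thesis using c1 unfolding D_def by linarith
  qed
  have KD: "K * D = c * K powr r"
  proof -
    have "K powr r = K * K powr (r - 1)" using pw_split[of K r] K r1 by simp
    thus ?thesis by (simp add: D_def)
  qed
  have key: "2 * r / (K * D) \<le> 2 powr (-r) * (1 / K) powr r"
  proof -
    have Kp: "0 < K powr r" using K by simp
    have "2 powr (-r) * c = 2 powr (-r) * 2 powr (r + 1) * r + 2 powr (-r)"
      by (simp add: c_def algebra_simps)
    also have "2 powr (-r) * 2 powr (r + 1) = 2" by (simp add: powr_add[symmetric])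
    finally have "2 * r \<le> 2 powr (-r) * c" by simp
    hence "2 * r / (c * K powr r) \<le> 2 powr (-r) * c / (c * K powr r)"
      using Kp c1 by (intro divide_right_mono) auto
    also have "\<dots> = 2 powr (-r) * (1 / K) powr r"
      using c1 Kp K by (simp add: powr_divide)
    finally show ?thesis unfolding KD .
  qed
  show ?thesis
    unfolding localized_wbl_embedding_def r_def[symmetric] c_def[symmetric] D_def[symmetric]
  proof (intro conjI allI impI)
    show "1 < K" by (rule K)
    show "1 < D" by (rule D1)
    fix \<Delta> :: real and C
    assume \<Delta>: "0 < \<Delta>"
      and hC: "C \<subseteq> lp_space p \<and> (\<exists>x\<in>C. \<exists>y\<in>C. x \<noteq> y) \<and> (\<forall>x\<in>C. \<forall>y\<in>C. lp_dist p x y \<le> K * \<Delta>)"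
    then obtain x1 y1 where x1: "x1 \<in> C" and y1: "y1 \<in> C" and xy1: "x1 \<noteq> y1" by blast
    have Csub: "C \<subseteq> lp_space p" and bnd: "\<And>x y. x \<in> C \<Longrightarrow> y \<in> C \<Longrightarrow> lp_dist p x y \<le> K * \<Delta>"
      using hC by auto
    define s where "s = K * \<Delta>"
    have s: "0 < s" using K \<Delta> by (simp add: s_def)
    define f where "f = (\<lambda>(x::nat \<Rightarrow> real) i. phi r ((x i - x1 i) / s))"
    have sd: "summable (\<lambda>i. \<bar>x i - y i\<bar> powr p)" if "x \<in> C" "y \<in> C" for x y
      using sum_diff[OF ppos] Csub that by (auto simp: lp_space_def)
    have su: "summable (\<lambda>i. \<bar>(x i - x1 i) / s\<bar> powr p)" if "x \<in> C" for x
      using single_sum(1)[OF s ppos sd[OF that x1]] .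
    have su1: "(\<Sum>i. \<bar>(x i - x1 i) / s\<bar> powr p) \<le> 1" if "x \<in> C" for x
    proof -
      have "lp_dist p x x1 powr p \<le> s powr p"
        using bnd[OF that x1] ppos by (intro powr_mono2) (auto simp: s_def lp_dist_def)
      hence "(\<Sum>i. \<bar>x i - x1 i\<bar> powr p) \<le> s powr p"
        using dist_pow[OF ppos sd[OF that x1]] by simp
      thus ?thesis using single_sum(2)[OF s ppos sd[OF that x1]] s by simp
    qed
    have fd: "lp_dist q (f x) (f y) = (\<Sum>i. \<bar>phi r ((x i - x1 i) / s) - phi r ((y i - x1 i) / s)\<bar> powr q) powr (1/q)" for x y
      unfolding f_def lp_dist_def by simp
    have up: "lp_dist q (f x) (f y) \<le> 2 * r * (lp_dist p x y / s)" if "x \<in> C" "y \<in> C" for x y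
      using mazur_upper[OF r1 q pr su[OF that(1)] su[OF that(2)] su1[OF that(1)] su1[OF that(2)]]
        scale_dist[OF s ppos sd[OF that], of x1] fd[of x y] by simp
    have low: "2 powr (-r) * (lp_dist p x y / s) powr r \<le> lp_dist q (f x) (f y)" if "x \<in> C" "y \<in> C" for x y
    proof -
      have "(\<Sum>i. \<bar>(x i - x1 i) / s - (y i - x1 i) / s\<bar> powr p) powr (1/q)
          = ((\<Sum>i. \<bar>(x i - x1 i) / s - (y i - x1 i) / s\<bar> powr p) powr (1/p)) powr r"
        using pr qpos r1 by (simp add: powr_powr)
      also have "\<dots> = (lp_dist p x y / s) powr r" using scale_dist[OF s ppos sd[OF that], of x1] by simp
      finally show ?thesis
        using mazur_lower[of r q p "\<lambda>i. (x i - x1 i) / s" "\<lambda>i. (y i - x1 i) / s"] r1 qpos pr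
          su[OF that(1)] su[OF that(2)] fd[of x y] by simp
    qed
    show "\<exists>f. f ` C \<subseteq> lp_space q \<and> lipschitz_wrt (lp_dist p) (lp_dist q) C f \<and>
             (\<exists>x\<in>C. \<exists>y\<in>C. f x \<noteq> f y) \<and>
             (\<forall>x\<in>C. \<forall>y\<in>C. \<Delta> < lp_dist p x y \<longrightarrow>
                lip_const (lp_dist p) (lp_dist q) C f / D * \<Delta> < lp_dist q (f x) (f y))"
    proof (intro exI[of _ f] conjI)
      show "f ` C \<subseteq> lp_space q"
        using su mazur_mem[of r p q] r1 pr by (auto simp: lp_space_def f_def)
      show "lipschitz_wrt (lp_dist p) (lp_dist q) C f"
        unfolding lipschitz_wrt_def
        by (rule exI[of _ "2 * r / s"]) (use up in simp)
      show "\<exists>x\<in>C. \<exists>y\<in>C. f x \<noteq> f y"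
      proof (intro bexI)
        show "f x1 \<noteq> f y1"
        proof
          assume "f x1 = f y1"
          hence "\<And>i. phi r ((x1 i - x1 i) / s) = phi r ((y1 i - x1 i) / s)"
            unfolding f_def by meson
          hence "\<And>i. (x1 i - x1 i) / s = (y1 i - x1 i) / s"
            using phi_inj[of r] r1 by (meson less_imp_le)
          hence "\<And>i. x1 i = y1 i" using s by simp
          thus False using xy1 by auto
        qed
      qed (use x1 y1 in auto)
      have Lb: "lip_const (lp_dist p) (lp_dist q) C f \<le> 2 * r / s"
        unfolding lip_const_def
      proof (rule cSup_least)
        show "{lp_dist q (f x) (f y) / lp_dist p x y |x y. x \<in> C \<and> y \<in> C \<and> x \<noteq> y} \<noteq> {}"
          using x1 y1 xy1 by blast
      next
        fix z assume "z \<in> {lp_dist q (f x) (f y) / lp_dist p x y |x y. x \<in> C \<and> y \<in> C \<and> x \<noteq> y}"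
        then obtain x y where xy: "x \<in> C" "y \<in> C" and z: "z = lp_dist q (f x) (f y) / lp_dist p x y" by blast
        show "z \<le> 2 * r / s"
        proof (cases "lp_dist p x y = 0")
          case True
          then show ?thesis using z r1 s by simp
        next
          case False
          hence "0 < lp_dist p x y" by (simp add: lp_dist_def less_le)
          thus ?thesis unfolding z using up[OF xy] by (simp add: pos_divide_le_eq)
        qed
      qed
      show "\<forall>x\<in>C. \<forall>y\<in>C. \<Delta> < lp_dist p x y \<longrightarrow>
                lip_const (lp_dist p) (lp_dist q) C f / D * \<Delta> < lp_dist q (f x) (f y)"
      proof (intro ballI impI)
        fix x y assume xy: "x \<in> C" "y \<in> C" and dlt: "\<Delta> < lp_dist p x y"
        have "lip_const (lp_dist p) (lp_dist q) C f / D * \<Delta> \<le> (2 * r / s) / D * \<Delta>"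
          using Lb D1 \<Delta> by (intro mult_right_mono divide_right_mono) auto
        also have "\<dots> = 2 * r / (K * D)" using \<Delta> by (simp add: s_def field_simps)
        also have "\<dots> \<le> 2 powr (-r) * (1 / K) powr r" by (rule key)
        also have "(1 / K) = \<Delta> / s" using \<Delta> by (simp add: s_def)
        also have "2 powr (-r) * (\<Delta> / s) powr r < 2 powr (-r) * (lp_dist p x y / s) powr r"
          using dlt s \<Delta> r1 by (intro mult_strict_left_mono powr_less_mono2 divide_strict_right_mono) auto
        also have "\<dots> \<le> lp_dist q (f x) (f y)" by (rule low[OF xy])
        finally show "lip_const (lp_dist p) (lp_dist q) C f / D * \<Delta> < lp_dist q (f x) (f y)" .
      qed
    qed
  qed
qed

theorem lemma18:
  shows "\<exists>c :: real \<Rightarrow> real. \<forall>K p q :: real. 1 < K \<and> 1 \<le> q \<and> q < p \<longrightarrow>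
           localized_wbl_embedding (lp_space p) (lp_dist p) (lp_space q) (lp_dist q)
             K (c (p / q) * K powr (p / q - 1))"
proof (rule exI[of _ "\<lambda>t. t * 2 powr (t + 1) + 1"], intro allI impI)
  fix K p q :: real assume "1 < K \<and> 1 \<le> q \<and> q < p"
  thus "localized_wbl_embedding (lp_space p) (lp_dist p) (lp_space q) (lp_dist q)
             K (((p/q) * 2 powr (p/q + 1) + 1) * K powr (p / q - 1))"
    using main_emb by blast
qed

end
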